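(* For every real $x\notin\mathbb Z$, $$\csc^2(\pi x)+|\cot(\pi x)\csc(\pi x)|\leqslant \tfrac14\|x\|^{-2}$$ and $$|\cot(\pi x)\csc(\pi x)|\leqslant \pi^{-2}\|x\|^{-2}.$$
   Context: For real $\theta$, $\|\theta\|=\min_{n\in\mathbb Z}|\theta-n|$ denotes the distance from $\theta$ to the nearest integer. *)

theory Defs
  imports Complex_Main
begin

definition csc :: "real \<Rightarrow> real" where
  "csc x = 1 / sin x"

definition dist_int :: "real \<Rightarrow> real" where
  "dist_int x = Inf {\<bar>x - of_int n\<bar> | n :: int. True}"

end

theory Submission imports Defs begin
lemma sin_lb: assumes "0 < x" "x \<le> pi" shows "x - x^3/6 \<le> sin x"
proof -
  obtain t where t: "0 < t" "t < x" "sin x = (\<Sum>m<4. sin_coeff m * x ^ m) + (sin (t + 1/2 * real 4 * pi) / fact 4) * x ^ 4"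
    using Maclaurin_sin_expansion3[of 4 x] assms by auto
  have "{..<4::nat} = {0,1,2,3}" by auto
  then have s: "(\<Sum>m<4. sin_coeff m * x ^ m) = x - x^3/6" by (simp add: sin_coeff_def fact_numeral)
  have "sin (t + 1/2 * real 4 * pi) = sin t" by (simp add: sin_add)
  moreover have "sin t \<ge> 0" using t assms by (intro sin_ge_zero) auto
  ultimately show ?thesis using t(3) s by simp
qed
lemma cos_ub: assumes "0 < x" "x \<le> pi/2" shows "cos x \<le> 1 - x^2/2 + x^4/24"
proof -
  obtain t where t: "0 < t" "t < x" "cos x = (\<Sum>m<6. cos_coeff m * x ^ m) + (cos (t + 1/2 * real 6 * pi) / fact 6) * x ^ 6"
    using Maclaurin_cos_expansion2[of x 6] assms by auto
  have "{..<6::nat} = {0,1,2,3,4,5}" by auto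
  then have s: "(\<Sum>m<6. cos_coeff m * x ^ m) = 1 - x^2/2 + x^4/24" by (simp add: cos_coeff_def fact_numeral)
  have "cos (t + 1/2 * real 6 * pi) = - cos t" by (simp add: cos_add)
  moreover have "cos t \<ge> 0" using t assms by (intro cos_ge_zero) auto
  ultimately show ?thesis using t(3) s by simp
qed
lemma xcos_le_sin: assumes "0 \<le> x" "x \<le> pi" shows "x * cos x \<le> sin x"
proof -
  let ?f = "\<lambda>x. sin x - x * cos x"
  have "?f 0 \<le> ?f x"
  proof (rule DERIV_nonneg_imp_nondecreasing[OF assms(1)])
    fix u assume "0 \<le> u" "u \<le> x"
    then show "\<exists>y. (?f has_real_derivative y) (at u) \<and> y \<ge> 0"
      using assms by (intro exI[of _ "u * sin u"]) (auto intro!: derivative_eq_intros mult_nonneg_nonneg sin_ge_zero)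
  qed
  then show ?thesis by simp
qed
lemma jordan: assumes "0 < u" "u \<le> pi/4" shows "sin (pi/4) / (pi/4) \<le> sin u / u"
proof (rule DERIV_nonpos_imp_nonincreasing[OF assms(2)])
  fix v assume v: "u \<le> v" "v \<le> pi/4"
  then have v0: "v > 0" using assms by linarith
  have "v * cos v - sin v \<le> 0" using xcos_le_sin[of v] v v0 pi_gt_zero by linarith
  then have "(v * cos v - sin v) / v^2 \<le> 0" by (simp add: divide_nonpos_nonneg)
  moreover have "((\<lambda>v. sin v / v) has_real_derivative (v * cos v - sin v) / v^2) (at v)"
    using v0 by (auto intro!: derivative_eq_intros simp: field_simps power2_eq_square)
  ultimately show "\<exists>y. ((\<lambda>v. sin v / v) has_real_derivative y) (at v) \<and> y \<le> 0" by blast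
qed
lemma core:
  fixes t :: real assumes t: "0 < t" "t \<le> pi/2"
  shows "(1 + cos t) / (sin t)^2 \<le> pi^2 / (4 * t^2)" and "cos t / (sin t)^2 \<le> 1 / t^2"
proof -
  have S: "sin t > 0" using t by (intro sin_gt_zero) auto
  have C: "cos t \<ge> 0" using t by (intro cos_ge_zero) auto
  have "t \<le> 2" using t pi_less_4 by linarith
  then have "t^2 \<le> 2^2" using t by (intro power_mono) auto
  then have t4: "t^2 \<le> 4" by simp
  then have t2: "t^2 \<le> 12" by simp
  have a: "t - t^3/6 \<le> sin t" using sin_lb t by simp
  have "t - t^3/6 = t * (1 - t^2/6)" by (simp add: algebra_simps power2_eq_square power3_eq_cube)
  then have a0: "0 \<le> t - t^3/6" using t4 t by simp
  have b: "cos t \<le> 1 - t^2/2 + t^4/24" using cos_ub t by simp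
  have "t^2 * cos t \<le> t^2 * (1 - t^2/2 + t^4/24)" using b by (simp add: mult_left_mono)
  also have "\<dots> \<le> (t - t^3/6)^2"
  proof -
    have "(t - t^3/6)^2 - t^2 * (1 - t^2/2 + t^4/24) = t^4 * (12 - t^2) / 72"
      by (simp add: algebra_simps power2_eq_square power3_eq_cube power4_eq_xxxx)
    also have "\<dots> \<ge> 0" using t2 by simp
    finally show ?thesis by simp
  qed
  also have "\<dots> \<le> (sin t)^2" using a a0 by (simp add: power_mono)
  finally have "t^2 * cos t \<le> (sin t)^2" .
  then show "cos t / (sin t)^2 \<le> 1 / t^2" using S t by (simp add: field_simps)
  define u where "u = t/2"
  have u: "0 < u" "u \<le> pi/4" using t by (auto simp: u_def)
  have j: "sin (pi/4) / (pi/4) \<le> sin u / u" by (rule jordan[OF u])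
  have j1: "u * (4 * sin (pi/4)) \<le> pi * sin u" using j u pi_gt_zero by (simp add: field_simps)
  have s45: "4 * sin (pi/4) = 2 * sqrt 2" by (simp add: sin_45)
  have j2: "2 * sqrt 2 * u \<le> pi * sin u" using j1 unfolding s45 by (simp add: algebra_simps)
  have "(2 * sqrt 2 * u)^2 \<le> (pi * sin u)^2" using j2 u by (intro power_mono) auto
  then have j3: "8 * u^2 \<le> pi^2 * (sin u)^2" by (simp add: power_mult_distrib)
  have cu: "1 - cos t = 2 * (sin u)^2" using cos_double_sin[of u] by (simp add: u_def)
  have sc: "(sin t)^2 = (1 - cos t) * (1 + cos t)" using sin_cos_squared_add[of t] by (simp add: algebra_simps power2_eq_square)
  have pc: "1 + cos t > 0" using C by simp
  have su: "sin u > 0" using u pi_gt_zero by (intro sin_gt_zero) auto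
  have nc: "1 - cos t > 0" using cu su by simp
  have "(1 + cos t) / (sin t)^2 = 1 / (1 - cos t)" unfolding sc using pc nc by (metis div_by_1 less_irrefl mult.commute nonzero_divide_mult_cancel_left)
  also have "\<dots> = 1 / (2 * (sin u)^2)" by (simp add: cu)
  also have "\<dots> \<le> pi^2 / (4 * t^2)" using j3 u su by (simp add: u_def field_simps power2_eq_square)
  finally show "(1 + cos t) / (sin t)^2 \<le> pi^2 / (4 * t^2)" .
qed
lemma per:
  fixes n :: int
  shows "\<bar>sin (y + pi * of_int n)\<bar> = \<bar>sin y\<bar>" "\<bar>cos (y + pi * of_int n)\<bar> = \<bar>cos y\<bar>"
  by (simp_all add: sin_add cos_add abs_mult)

lemma powi_m2: "(a::real) powi (-2) = 1 / a^2"
  by (simp add: power_int_minus divide_inverse)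

lemma dist_int_eq:
  fixes x :: real
  assumes "x \<notin> \<int>"
  defines "r \<equiv> x - of_int \<lfloor>x\<rfloor>"
  shows "0 < r" "r < 1" "dist_int x = min r (1 - r)"
proof -
  have "r \<noteq> 0" using assms unfolding r_def by (metis Ints_of_int eq_iff_diff_eq_0)
  moreover have "0 \<le> r" "r < 1" unfolding r_def by linarith+
  ultimately show r0: "0 < r" and "r < 1" by auto
  show "dist_int x = min r (1 - r)"
    unfolding dist_int_def
  proof (rule cInf_eq_minimum)
    show "min r (1 - r) \<in> {\<bar>x - of_int n\<bar> | n :: int. True}"
    proof (cases "r \<le> 1 - r")
      case True
      then show ?thesis using r0 by (intro CollectI exI[of _ "\<lfloor>x\<rfloor>"]) (auto simp: r_def)
    next
      case False
      then show ?thesis using \<open>r < 1\<close>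
        by (intro CollectI exI[of _ "\<lfloor>x\<rfloor> + 1"]) (auto simp: r_def)
    qed
  next
    fix z assume "z \<in> {\<bar>x - of_int n\<bar> | n :: int. True}"
    then obtain n :: int where z: "z = \<bar>x - of_int n\<bar>" by auto
    show "min r (1 - r) \<le> z"
    proof (cases "n \<le> \<lfloor>x\<rfloor>")
      case True
      then have "real_of_int n \<le> of_int \<lfloor>x\<rfloor>" by linarith
      then show ?thesis using z r0 unfolding r_def by linarith
    next
      case False
      then have "real_of_int n \<ge> of_int \<lfloor>x\<rfloor> + 1" by linarith
      then show ?thesis using z r0 unfolding r_def by linarith
    qed
  qed
qed

theorem lemma1:
  fixes x :: real
  assumes "x \<notin> \<int>"
  shows "(csc (pi * x))\<^sup>2 + \<bar>cot (pi * x) * csc (pi * x)\<bar> \<le> (1/4) * (dist_int x) powi (-2)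
     \<and> \<bar>cot (pi * x) * csc (pi * x)\<bar> \<le> pi powi (-2) * (dist_int x) powi (-2)"
proof -
  define r where "r = x - of_int \<lfloor>x\<rfloor>"
  have r: "0 < r" "r < 1" "dist_int x = min r (1 - r)"
    using dist_int_eq[OF assms] by (auto simp: r_def)
  define d where "d = dist_int x"
  have d: "0 < d" "d \<le> 1/2" using r by (auto simp: d_def min_def)
  define t where "t = pi * d"
  have t: "0 < t" "t \<le> pi/2" using d pi_gt_zero by (auto simp: t_def)
  have sc: "\<bar>sin (pi * x)\<bar> = sin t \<and> \<bar>cos (pi * x)\<bar> = cos t"
  proof (cases "r \<le> 1 - r")
    case True
    then have "d = r" using r by (simp add: d_def)
    then have "x = d + of_int \<lfloor>x\<rfloor>" by (simp add: r_def)
    then have "pi * x = t + pi * of_int \<lfloor>x\<rfloor>" by (metis t_def distrib_left)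
    then show ?thesis using per[of t "\<lfloor>x\<rfloor>"] t
      by (simp add: sin_ge_zero cos_ge_zero)
  next
    case False
    then have "d = 1 - r" using r by (simp add: d_def)
    then have "x = - d + of_int (\<lfloor>x\<rfloor> + 1)" by (simp add: r_def)
    then have "pi * x = - t + pi * of_int (\<lfloor>x\<rfloor> + 1)" by (metis t_def distrib_left mult_minus_right)
    then show ?thesis using per[of "-t" "\<lfloor>x\<rfloor> + 1"] t
      by (simp add: sin_ge_zero cos_ge_zero)
  qed
  have S: "sin t > 0" using t by (intro sin_gt_zero) auto
  have e1: "(csc (pi * x))\<^sup>2 = 1 / (sin t)^2"
  proof -
    have "(csc (pi * x))\<^sup>2 = 1 / \<bar>sin (pi * x)\<bar>^2" by (simp add: csc_def power_divide)
    then show ?thesis using sc by simp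
  qed
  have e2: "\<bar>cot (pi * x) * csc (pi * x)\<bar> = cos t / (sin t)^2"
  proof -
    have "\<bar>cot (pi * x) * csc (pi * x)\<bar> = \<bar>cos (pi * x)\<bar> / \<bar>sin (pi * x)\<bar>^2"
      by (simp add: cot_def csc_def abs_mult power2_eq_square)
    then show ?thesis using sc by simp
  qed
  have f1: "(1/4) * (dist_int x) powi (-2) = pi^2 / (4 * t^2)"
    using pi_gt_zero d unfolding d_def[symmetric] by (simp add: powi_m2 t_def power_mult_distrib field_simps)
  have f2: "pi powi (-2) * (dist_int x) powi (-2) = 1 / t^2"
    using pi_gt_zero d unfolding d_def[symmetric] by (simp add: powi_m2 t_def power_mult_distrib field_simps)
  have "1 / (sin t)^2 + cos t / (sin t)^2 = (1 + cos t) / (sin t)^2" by (simp add: add_divide_distrib)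
  then show ?thesis using core[OF t] unfolding e1 e2 f1 f2 by simp
qed

end
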